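(* Let $T$ be dependent. For every formula $\varphi(\bar x,\bar y,\bar z)$ with $\bar y,\bar z$ finite there is $n<\omega$ (depending only on $\varphi$ and $T$) such that for every $\mathbf x\in K_0$ with $\ell g(\bar x)=\ell g(\bar{\mathbf d}_{\mathbf x})$ the set $$J_{\mathbf x,\varphi}=\{t\in I_{\mathbf x}:\ n_{\mathbf x,t}\ge 2\text{ and there are }\alpha_0,\dots,\alpha_{k-1}<\ell g(\bar c_{\mathbf x,t,0})\ (k=\ell g(\bar y))\text{ and }\bar b\in{}^{\ell g(\bar z)}(A_{\mathbf x}\cup\textstyle\bigcup\{\bar c_{\mathbf x,s}:s\in I_{\mathbf x}\setminus\{t\}\})$$ $$\text{with }\mathfrak C\models\varphi[\bar{\mathbf d}_{\mathbf x},\langle(\bar c_{\mathbf x,t,0})_{\alpha_i}:i<k\rangle,\bar b]\wedge\neg\varphi[\bar{\mathbf d}_{\mathbf x},\langle(\bar c_{\mathbf x,t,1})_{\alpha_i}:i<k\rangle,\bar b]\}$$ has at most $n$ elements.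
   Context: $T$ complete first-order, $\mathfrak C$ its monster model; dependent = NIP. $K_0$ is the family of $\mathbf x=(A,B,\bar{\mathbf c},\bar{\mathbf d})$ where $B\subseteq A$, $\bar{\mathbf d}$ is a sequence, $I=I_{\mathbf x}$ is a linear order, $\bar{\mathbf c}=\langle\bar c_{t,n}:t\in I,n<n_t\rangle$ with $1\le n_t\le\omega$, each $\bar c_{t,n}$ a finite sequence with $\ell g(\bar c_{t,n})$ depending only on $t$, $\bar c_t=\bar c_{t,0}{}^\frown\bar c_{t,1}{}^\frown\cdots$, and for each $t\in I$ the sequence $\langle\bar c_{t,n}:n<n_t\rangle$ is indiscernible over $A\cup\bigcup\{\bar c_s:s\in I\setminus\{t\}\}$. Write $A_{\mathbf x},\bar{\mathbf d}_{\mathbf x},I_{\mathbf x},\bar c_{\mathbf x,t},\bar c_{\mathbf x,t,n},n_{\mathbf x,t}$; $(\bar c)_\alpha$ denotes the $\alpha$-th entry of $\bar c$. *)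

theory Defs
  imports Main "HOL-Library.Extended_Nat"
begin

text \<open>Terms and formulas over function symbols 'f, relation symbols 'r and
  variables 'v. Symbols carry no fixed arity (equivalently: symbols are pairs
  name/arity).\<close>

datatype ('f, 'v) trm = Var 'v | App 'f "('f, 'v) trm list"

datatype ('f, 'r, 'v) fml =
    Eq "('f, 'v) trm" "('f, 'v) trm"
  | Rel 'r "('f, 'v) trm list"
  | Neg "('f, 'r, 'v) fml"
  | Conj "('f, 'r, 'v) fml" "('f, 'r, 'v) fml"
  | Ex 'v "('f, 'r, 'v) fml"

text \<open>A structure with universe the whole type 'a.\<close>
record ('f, 'r, 'a) struc =
  fn_of :: "'f \<Rightarrow> 'a list \<Rightarrow> 'a"
  rel_of :: "'r \<Rightarrow> 'a list \<Rightarrow> bool"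

fun eval :: "('f, 'r, 'a) struc \<Rightarrow> ('v \<Rightarrow> 'a) \<Rightarrow> ('f, 'v) trm \<Rightarrow> 'a" where
  "eval M s (Var v) = s v"
| "eval M s (App f ts) = fn_of M f (map (eval M s) ts)"

fun sat :: "('f, 'r, 'a) struc \<Rightarrow> ('v \<Rightarrow> 'a) \<Rightarrow> ('f, 'r, 'v) fml \<Rightarrow> bool" where
  "sat M s (Eq t u) = (eval M s t = eval M s u)"
| "sat M s (Rel r ts) = rel_of M r (map (eval M s) ts)"
| "sat M s (Neg \<phi>) = (\<not> sat M s \<phi>)"
| "sat M s (Conj \<phi> \<psi>) = (sat M s \<phi> \<and> sat M s \<psi>)"
| "sat M s (Ex v \<phi>) = (\<exists>a. sat M (s(v := a)) \<phi>)"

fun fvt :: "('f, 'v) trm \<Rightarrow> 'v set" where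
  "fvt (Var v) = {v}"
| "fvt (App f ts) = \<Union> (set (map fvt ts))"

fun fv :: "('f, 'r, 'v) fml \<Rightarrow> 'v set" where
  "fv (Eq t u) = fvt t \<union> fvt u"
| "fv (Rel r ts) = \<Union> (set (map fvt ts))"
| "fv (Neg \<phi>) = fv \<phi>"
| "fv (Conj \<phi> \<psi>) = fv \<phi> \<union> fv \<psi>"
| "fv (Ex v \<phi>) = fv \<phi> - {v}"

text \<open>psi(x,y) with x-variables Inl _ and y-variables Inr _ has the independence
  property in M: for every n there are tuples a_0..a_{n-1} shattered by psi.\<close>
definition has_IP :: "('f, 'r, 'a) struc \<Rightarrow> ('f, 'r, nat + nat) fml \<Rightarrow> bool" where
  "has_IP M \<psi> \<longleftrightarrow> (\<forall>n::nat. \<exists>a :: nat \<Rightarrow> nat \<Rightarrow> 'a. \<forall>S \<subseteq> {..<n}. \<exists>b :: nat \<Rightarrow> 'a.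
      \<forall>i<n. sat M (\<lambda>v. case v of Inl j \<Rightarrow> a i j | Inr j \<Rightarrow> b j) \<psi> \<longleftrightarrow> i \<in> S)"

definition dependent :: "('f, 'r, 'a) struc \<Rightarrow> bool" where
  "dependent M \<longleftrightarrow> (\<forall>\<psi> :: ('f, 'r, nat + nat) fml. \<not> has_IP M \<psi>)"

definition incr_seq :: "nat \<Rightarrow> enat \<Rightarrow> (nat \<Rightarrow> nat) \<Rightarrow> bool" where
  "incr_seq m N f \<longleftrightarrow> (\<forall>i j. i < j \<and> j < m \<longrightarrow> f i < f j) \<and> (\<forall>i<m. enat (f i) < N)"

text \<open>The sequence of L-tuples (c k : k < N) is indiscernible over P in M.
  Variable Inl (i, alpha) stands for the alpha-th entry of the i-th chosen tuple,
  Inr j for the j-th parameter.\<close>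
definition indisc :: "('f, 'r, 'a) struc \<Rightarrow> 'a set \<Rightarrow> nat \<Rightarrow> enat \<Rightarrow> (nat \<Rightarrow> 'a list) \<Rightarrow> bool" where
  "indisc M P L N c \<longleftrightarrow>
    (\<forall>(\<psi> :: ('f, 'r, nat \<times> nat + nat) fml) (m::nat) (q::nat) (e :: nat \<Rightarrow> 'a) f g.
       fv \<psi> \<subseteq> {Inl (i, \<alpha>) | i \<alpha>. i < m \<and> \<alpha> < L} \<union> Inr ` {..<q}
       \<and> (\<forall>j<q. e j \<in> P) \<and> incr_seq m N f \<and> incr_seq m N g \<longrightarrow>
       (sat M (\<lambda>v. case v of Inl (i, \<alpha>) \<Rightarrow> c (f i) ! \<alpha> | Inr j \<Rightarrow> e j) \<psi>
        \<longleftrightarrow> sat M (\<lambda>v. case v of Inl (i, \<alpha>) \<Rightarrow> c (g i) ! \<alpha> | Inr j \<Rightarrow> e j) \<psi>))"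

text \<open>x = (A, B, c, d) with index set I; n t = n_{x,t}, L t = length of each c_{t,k},
  c t k = c_{x,t,k} (for k < n t), d = the sequence d_x indexed by 'i.\<close>

definition cset :: "(nat \<Rightarrow> 'a list) \<Rightarrow> enat \<Rightarrow> 'a set" where
  "cset ct N = (\<Union>k \<in> {k. enat k < N}. set (ct k))"

definition params :: "'a set \<Rightarrow> 't set \<Rightarrow> ('t \<Rightarrow> enat) \<Rightarrow> ('t \<Rightarrow> nat \<Rightarrow> 'a list) \<Rightarrow> 't \<Rightarrow> 'a set" where
  "params A I n c t = A \<union> (\<Union>s \<in> I - {t}. cset (c s) (n s))"

definition K0 :: "('f, 'r, 'a) struc \<Rightarrow> 'a set \<Rightarrow> 'a set \<Rightarrow> 't set \<Rightarrow> ('t \<Rightarrow> enat) \<Rightarrow> ('t \<Rightarrow> nat)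
    \<Rightarrow> ('t \<Rightarrow> nat \<Rightarrow> 'a list) \<Rightarrow> ('i \<Rightarrow> 'a) \<Rightarrow> bool" where
  "K0 M A B I n L c d \<longleftrightarrow> B \<subseteq> A
     \<and> (\<forall>t\<in>I. 1 \<le> n t \<and> n t \<le> \<infinity>)
     \<and> (\<forall>t\<in>I. \<forall>k. enat k < n t \<longrightarrow> length (c t k) = L t)
     \<and> (\<forall>t\<in>I. indisc M (params A I n c t) (L t) (n t) (c t))"

text \<open>phi(x,y,z): x-variables Inl i (matched with d i), y-variables Inr (Inl i),
  z-variables Inr (Inr j).\<close>
definition asg3 :: "('i \<Rightarrow> 'a) \<Rightarrow> (nat \<Rightarrow> 'a) \<Rightarrow> (nat \<Rightarrow> 'a) \<Rightarrow> 'i + nat + nat \<Rightarrow> 'a" where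
  "asg3 d y z = (\<lambda>v. case v of Inl i \<Rightarrow> d i | Inr (Inl i) \<Rightarrow> y i | Inr (Inr j) \<Rightarrow> z j)"

definition Jset :: "('f, 'r, 'a) struc \<Rightarrow> ('f, 'r, 'i + nat + nat) fml \<Rightarrow> nat \<Rightarrow> nat
    \<Rightarrow> 'a set \<Rightarrow> 't set \<Rightarrow> ('t \<Rightarrow> enat) \<Rightarrow> ('t \<Rightarrow> nat) \<Rightarrow> ('t \<Rightarrow> nat \<Rightarrow> 'a list) \<Rightarrow> ('i \<Rightarrow> 'a) \<Rightarrow> 't set" where
  "Jset M \<phi> k m A I n L c d = {t \<in> I. 2 \<le> n t \<and>
      (\<exists>(\<alpha> :: nat \<Rightarrow> nat) (b :: nat \<Rightarrow> 'a). (\<forall>i<k. \<alpha> i < L t) \<and> (\<forall>j<m. b j \<in> params A I n c t)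
         \<and> sat M (asg3 d (\<lambda>i. c t 0 ! \<alpha> i) b) \<phi>
         \<and> \<not> sat M (asg3 d (\<lambda>i. c t 1 ! \<alpha> i) b) \<phi>)}"

end

theory Submission
  imports Defs
begin


fun subt :: "('v \<Rightarrow> 'w) \<Rightarrow> ('f,'v) trm \<Rightarrow> ('f,'w) trm" where
  "subt \<sigma> (Var v) = Var (\<sigma> v)"
| "subt \<sigma> (App f ts) = App f (map (subt \<sigma>) ts)"

fun subf :: "(nat \<Rightarrow> 'w) \<Rightarrow> ('v \<Rightarrow> 'w) \<Rightarrow> nat \<Rightarrow> ('f,'r,'v) fml \<Rightarrow> ('f,'r,'w) fml" where
  "subf fr \<sigma> d (Eq t u) = Eq (subt \<sigma> t) (subt \<sigma> u)"
| "subf fr \<sigma> d (Rel r ts) = Rel r (map (subt \<sigma>) ts)"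
| "subf fr \<sigma> d (Neg \<phi>) = Neg (subf fr \<sigma> d \<phi>)"
| "subf fr \<sigma> d (Conj \<phi> \<psi>) = Conj (subf fr \<sigma> d \<phi>) (subf fr \<sigma> d \<psi>)"
| "subf fr \<sigma> d (Ex v \<phi>) = Ex (fr d) (subf fr (\<sigma>(v := fr d)) (Suc d) \<phi>)"

lemma eval_subt: "eval M s (subt \<sigma> t) = eval M (s \<circ> \<sigma>) t"
  by (induction t) (auto cong: map_cong)

lemma fvt_subt: "fvt (subt \<sigma> t) = \<sigma> ` fvt t"
  by (induction t) auto

lemma sat_subf:
  assumes "inj fr" "\<forall>v. \<sigma> v \<notin> fr ` {d..}"
  shows "sat M s (subf fr \<sigma> d \<phi>) = sat M (s \<circ> \<sigma>) \<phi>"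
  using assms(2)
proof (induction \<phi> arbitrary: \<sigma> d s)
  case (Eq t u) then show ?case by (simp add: eval_subt comp_def)
next
  case (Rel r ts) then show ?case by (simp add: eval_subt comp_def)
next
  case (Neg \<phi>) then show ?case by simp
next
  case (Conj \<phi> \<psi>) then show ?case by simp
next
  case (Ex v \<phi>)
  have inv: "\<forall>w. (\<sigma>(v := fr d)) w \<notin> fr ` {Suc d..}"
  proof
    fix w show "(\<sigma>(v := fr d)) w \<notin> fr ` {Suc d..}"
    proof (cases "w = v")
      case True
      then show ?thesis using injD[OF assms(1)] by fastforce
    next
      case False
      then show ?thesis using Ex.prems by (auto simp: image_iff)
    qed
  qed
  have eq: "(s(fr d := a)) \<circ> (\<sigma>(v := fr d)) = (s \<circ> \<sigma>)(v := a)" for a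
  proof
    fix w show "((s(fr d := a)) \<circ> (\<sigma>(v := fr d))) w = ((s \<circ> \<sigma>)(v := a)) w"
      using Ex.prems by (cases "w = v") auto
  qed
  have "sat M (s(fr d := a)) (subf fr (\<sigma>(v := fr d)) (Suc d) \<phi>) = sat M ((s \<circ> \<sigma>)(v := a)) \<phi>" for a
    using Ex.IH[OF inv, of "s(fr d := a)"] eq[of a] by metis
  then show ?case by (simp add: comp_def)
qed

lemma fv_subf: "fv (subf fr \<sigma> d \<phi>) \<subseteq> \<sigma> ` fv \<phi>"
proof (induction \<phi> arbitrary: \<sigma> d)
  case (Ex v \<phi>)
  show ?case
  proof
    fix x assume "x \<in> fv (subf fr \<sigma> d (fml.Ex v \<phi>))"
    then have x: "x \<in> fv (subf fr (\<sigma>(v := fr d)) (Suc d) \<phi>)" "x \<noteq> fr d" by auto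
    then obtain w where "w \<in> fv \<phi>" "x = (\<sigma>(v := fr d)) w" using Ex.IH by blast
    then show "x \<in> \<sigma> ` fv (fml.Ex v \<phi>)" using x(2) by (cases "w = v") auto
  qed
next
  case (Conj \<phi>1 \<phi>2) then show ?case by (simp add: image_Un) blast
qed (auto simp: fvt_subt)

lemma eval_agree: "(\<forall>v\<in>fvt t. s v = s' v) \<Longrightarrow> eval M s t = eval M s' t"
  by (induction t) (auto cong: map_cong)

lemma sat_agree: "(\<forall>v\<in>fv \<phi>. s v = s' v) \<Longrightarrow> sat M s \<phi> = sat M s' \<phi>"
proof (induction \<phi> arbitrary: s s')
  case (Eq t u) then show ?case using eval_agree[of t s s' M] eval_agree[of u s s' M] by simp
next
  case (Rel r ts)
  then have "map (eval M s) ts = map (eval M s') ts"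
    using eval_agree by (fastforce intro: map_cong)
  then show ?case by (simp only: sat.simps)
next
  case (Ex v \<phi>)
  have "sat M (s(v := a)) \<phi> = sat M (s'(v := a)) \<phi>" for a
    using Ex.prems by (intro Ex.IH) auto
  then show ?case by simp
next
  case (Conj \<phi>1 \<phi>2)
  then have "sat M s \<phi>1 = sat M s' \<phi>1" "sat M s \<phi>2 = sat M s' \<phi>2" by auto
  then show ?case by simp
qed auto

lemma finite_fvt: "finite (fvt t)" by (induction t) auto
lemma finite_fv: "finite (fv \<phi>)" by (induction \<phi>) (auto simp: finite_fvt)

definition ttrue :: "('f,'r,'v) fml" where
  "ttrue = Ex undefined (Eq (Var undefined) (Var undefined))"

definition conjs :: "('f,'r,'v) fml list \<Rightarrow> ('f,'r,'v) fml" where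
  "conjs ls = foldr Conj ls ttrue"

lemma sat_conjs: "sat M s (conjs ls) \<longleftrightarrow> (\<forall>\<psi>\<in>set ls. sat M s \<psi>)"
  by (induction ls) (auto simp: conjs_def ttrue_def)

lemma fv_conjs: "fv (conjs ls) = (\<Union>\<psi>\<in>set ls. fv \<psi>)"
  by (induction ls) (auto simp: conjs_def ttrue_def)

lemma sat_exs: "sat M w (foldr Ex vs \<psi>) \<longleftrightarrow> (\<exists>w'. (\<forall>v. v \<notin> set vs \<longrightarrow> w' v = w v) \<and> sat M w' \<psi>)"
proof (induction vs arbitrary: w)
  case Nil
  then show ?case by (auto intro: exI[of _ w] simp: fun_eq_iff)
next
  case (Cons v vs)
  show ?case
  proof
    assume "sat M w (foldr fml.Ex (v # vs) \<psi>)"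
    then obtain a where "sat M (w(v := a)) (foldr fml.Ex vs \<psi>)" by auto
    then obtain w' where "\<forall>x. x \<notin> set vs \<longrightarrow> w' x = (w(v:=a)) x" "sat M w' \<psi>" using Cons.IH by blast
    then show "\<exists>w'. (\<forall>x. x \<notin> set (v # vs) \<longrightarrow> w' x = w x) \<and> sat M w' \<psi>"
      by (intro exI[of _ w']) auto
  next
    assume "\<exists>w'. (\<forall>x. x \<notin> set (v # vs) \<longrightarrow> w' x = w x) \<and> sat M w' \<psi>"
    then obtain w' where w': "\<forall>x. x \<notin> set (v # vs) \<longrightarrow> w' x = w x" "sat M w' \<psi>" by blast
    then have "\<forall>x. x \<notin> set vs \<longrightarrow> w' x = (w(v:= w' v)) x" by auto
    then have "sat M (w(v := w' v)) (foldr fml.Ex vs \<psi>)" using Cons.IH w'(2) by blast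
    then show "sat M w (foldr fml.Ex (v # vs) \<psi>)" by auto
  qed
qed

lemma fv_exs: "fv (foldr Ex vs \<psi>) = fv \<psi> - set vs"
  by (induction vs) auto



lemma exists_low_indeg:
  assumes "finite F" "F \<noteq> {}" "\<forall>x\<in>F. card {y\<in>F. R x y} \<le> m"
  shows "\<exists>v\<in>F. card {x\<in>F. R x v} \<le> m"
proof (rule ccontr)
  assume "\<not> ?thesis"
  then have big: "\<forall>v\<in>F. Suc m \<le> card {x\<in>F. R x v}" by auto
  have "(\<Sum>v\<in>F. card {x\<in>F. R x v}) = (\<Sum>v\<in>F. \<Sum>x\<in>F. if R x v then 1 else (0::nat))"
    using assms(1) by (simp add: sum.If_cases Int_def conj_commute)
  also have "\<dots> = (\<Sum>x\<in>F. \<Sum>v\<in>F. if R x v then 1 else (0::nat))" by (rule sum.swap)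
  also have "\<dots> = (\<Sum>x\<in>F. card {v\<in>F. R x v})"
    using assms(1) by (simp add: sum.If_cases Int_def conj_commute)
  also have "\<dots> \<le> (\<Sum>x\<in>F. m)" using assms(3) by (intro sum_mono) auto
  finally have "(\<Sum>v\<in>F. card {x\<in>F. R x v}) \<le> card F * m" by simp
  moreover have "(\<Sum>v\<in>F. Suc m) \<le> (\<Sum>v\<in>F. card {x\<in>F. R x v})" using big by (intro sum_mono) auto
  ultimately have "card F * Suc m \<le> card F * m" by simp
  then show False using assms(1,2) by simp
qed

lemma indep_set:
  assumes "finite F" "\<forall>x\<in>F. card {y\<in>F. R x y} \<le> m"
  shows "\<exists>T\<subseteq>F. (\<forall>x\<in>T. \<forall>y\<in>T. R x y \<longrightarrow> x = y) \<and> card F \<le> (2*m+1) * card T"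
  using assms
proof (induction "card F" arbitrary: F rule: less_induct)
  case less
  show ?case
  proof (cases "F = {}")
    case True then show ?thesis by auto
  next
    case False
    obtain v where v: "v \<in> F" "card {x\<in>F. R x v} \<le> m"
      using exists_low_indeg[OF less.prems(1) False less.prems(2)] by blast
    define Rm where "Rm = insert v ({y\<in>F. R v y} \<union> {x\<in>F. R x v})"
    define F' where "F' = F - Rm"
    have fin': "finite F'" using less.prems(1) by (simp add: F'_def)
    have lt: "card F' < card F" unfolding F'_def Rm_def using v(1) less.prems(1)
      by (intro psubset_card_mono) auto
    have deg': "\<forall>x\<in>F'. card {y\<in>F'. R x y} \<le> m"
    proof
      fix x assume "x \<in> F'"
      then have "card {y\<in>F'. R x y} \<le> card {y\<in>F. R x y}"
        using less.prems(1) by (intro card_mono) (auto simp: F'_def)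
      then show "card {y\<in>F'. R x y} \<le> m" using less.prems(2) \<open>x \<in> F'\<close> F'_def by fastforce
    qed
    obtain T' where T': "T' \<subseteq> F'" "\<forall>x\<in>T'. \<forall>y\<in>T'. R x y \<longrightarrow> x = y" "card F' \<le> (2*m+1) * card T'"
      using less.hyps[OF lt fin' deg'] by blast
    have finT': "finite T'" using T'(1) fin' finite_subset by blast
    have vT': "v \<notin> T'" using T'(1) by (auto simp: F'_def Rm_def)
    have cRm: "card Rm \<le> 2*m+1"
    proof -
      have "card Rm \<le> Suc (card ({y\<in>F. R v y} \<union> {x\<in>F. R x v}))"
        unfolding Rm_def by (rule card_insert_le_m1) auto
      also have "\<dots> \<le> Suc (card {y\<in>F. R v y} + card {x\<in>F. R x v})"
        using card_Un_le by simp
      finally show ?thesis using v less.prems(2) by fastforce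
    qed
    have "F \<subseteq> F' \<union> Rm" unfolding F'_def by auto
    then have "card F \<le> card F' + card Rm"
    proof -
      have "finite Rm" unfolding Rm_def using less.prems(1) by auto
      then have "card F \<le> card (F' \<union> Rm)" using \<open>F \<subseteq> F' \<union> Rm\<close> fin' by (intro card_mono) auto
      then show ?thesis using card_Un_le[of F' Rm] by linarith
    qed
    also have "\<dots> \<le> (2*m+1) * card T' + (2*m+1)" using T'(3) cRm by simp
    also have "\<dots> = (2*m+1) * card (insert v T')" using finT' vT' by simp
    finally have c: "card F \<le> (2*m+1) * card (insert v T')" .
    have ind: "\<forall>x\<in>insert v T'. \<forall>y\<in>insert v T'. R x y \<longrightarrow> x = y"
      using T'(1,2) by (auto simp: F'_def Rm_def)
    show ?thesis using c ind T'(1) v(1) F'_def by (intro exI[of _ "insert v T'"]) auto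
  qed
qed



lemma dm_lemma: "(r::nat) < K \<Longrightarrow> (i*K + r) div K = i \<and> (i*K+r) mod K = r"
  by simp

lemma lt_lemma: "(i::nat) < n \<Longrightarrow> r < K \<Longrightarrow> i*K + r < n*K"
proof -
  assume a: "i < n" "r < K"
  have "i*K + r < i*K + K" using a by simp
  also have "\<dots> = Suc i * K" by simp
  also have "\<dots> \<le> n*K" using a by (intro mult_le_mono1) simp
  finally show ?thesis .
qed

definition frI :: "nat \<Rightarrow> nat + nat" where "frI d = Inr (2*d+1)"
definition sigI :: "('i \<Rightarrow> nat) \<Rightarrow> 'i + nat + nat \<Rightarrow> nat + nat" where
  "sigI h v = (case v of Inl \<iota> \<Rightarrow> Inr (2 * h \<iota>) | Inr (Inl i) \<Rightarrow> Inl (2*i) | Inr (Inr j) \<Rightarrow> Inl (2*j+1))"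

lemma shatter:
  fixes \<phi> :: "('f,'r,'i+nat+nat) fml" and M :: "('f,'r,'a) struc"
  assumes h: "inj_on h {\<iota>. Inl \<iota> \<in> fv \<phi>}"
    and sh: "\<forall>S\<subseteq>{..<n}. \<exists>d'. \<forall>i<n. (i\<in>S \<longleftrightarrow> sat M (asg3 d' (Y i) (Z i)) \<phi>)"
  shows "\<exists>a. \<forall>S\<subseteq>{..<n}. \<exists>b. \<forall>i<n. sat M (\<lambda>v. case v of Inl j \<Rightarrow> a i j | Inr j \<Rightarrow> b j) (subf frI (sigI h) 0 \<phi>) \<longleftrightarrow> i\<in>S"
proof -
  define X where "X = {\<iota>. Inl \<iota> \<in> fv \<phi>}"
  have injfr: "inj frI" by (auto simp: inj_def frI_def)
  have inv: "\<forall>v. sigI h v \<notin> frI ` {0..}"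
    by (auto simp: sigI_def frI_def split: sum.splits) presburger+
  define a where "a i j = (if even j then Y i (j div 2) else Z i (j div 2))" for i j
  show ?thesis
  proof (intro exI[of _ a] allI impI)
    fix S assume "S \<subseteq> {..<n}"
    then obtain d' where d': "\<forall>i<n. (i\<in>S \<longleftrightarrow> sat M (asg3 d' (Y i) (Z i)) \<phi>)" using sh by blast
    define b where "b j = d' (inv_into X h (j div 2))" for j
    show "\<exists>b. \<forall>i<n. sat M (\<lambda>v. case v of Inl j \<Rightarrow> a i j | Inr j \<Rightarrow> b j) (subf frI (sigI h) 0 \<phi>) \<longleftrightarrow> i\<in>S"
    proof (intro exI[of _ b] allI impI)
      fix i assume i: "i < n"
      have "sat M (\<lambda>v. case v of Inl j \<Rightarrow> a i j | Inr j \<Rightarrow> b j) (subf frI (sigI h) 0 \<phi>)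
          = sat M ((\<lambda>v. case v of Inl j \<Rightarrow> a i j | Inr j \<Rightarrow> b j) \<circ> sigI h) \<phi>"
        by (rule sat_subf[OF injfr inv])
      also have "\<dots> = sat M (asg3 d' (Y i) (Z i)) \<phi>"
      proof (rule sat_agree, intro ballI)
        fix v assume v: "v \<in> fv \<phi>"
        show "((\<lambda>v. case v of Inl j \<Rightarrow> a i j | Inr j \<Rightarrow> b j) \<circ> sigI h) v = asg3 d' (Y i) (Z i) v"
        proof (cases v)
          case (Inl \<iota>)
          then have "\<iota> \<in> X" using v X_def by simp
          then show ?thesis using Inl h X_def by (simp add: sigI_def asg3_def b_def)
        next
          case (Inr w)
          then show ?thesis
            by (cases w) (simp_all add: sigI_def asg3_def a_def)
        qed
      qed
      finally show "sat M (\<lambda>v. case v of Inl j \<Rightarrow> a i j | Inr j \<Rightarrow> b j) (subf frI (sigI h) 0 \<phi>) \<longleftrightarrow> i\<in>S"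
        using d' i by simp
    qed
  qed
qed


definition frT :: "nat \<Rightarrow> nat \<times> nat + nat" where "frT d = Inl (d+2, 0)"
definition sigT :: "('i \<Rightarrow> nat) \<Rightarrow> nat \<Rightarrow> (nat \<Rightarrow> nat) \<Rightarrow> nat \<Rightarrow> nat \<Rightarrow> nat \<Rightarrow> 'i + nat + nat \<Rightarrow> nat \<times> nat + nat" where
  "sigT h u au k m i v = (case v of Inl \<iota> \<Rightarrow> Inl (1, h \<iota>)
      | Inr (Inl i') \<Rightarrow> (if i = u then Inl (0, au i') else Inr (i*(k+m)+i'))
      | Inr (Inr j) \<Rightarrow> Inr (i*(k+m)+k+j))"

lemma transfer_step:
  fixes \<phi> :: "('f,'r,'i+nat+nat) fml" and M :: "('f,'r,'a) struc" and u n k m :: nat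
    and cu :: "nat \<Rightarrow> 'a list" and Y Z :: "nat \<Rightarrow> nat \<Rightarrow> 'a" and au :: "nat \<Rightarrow> nat"
  assumes fv\<phi>: "fv \<phi> \<subseteq> range Inl \<union> Inr ` Inl ` {..<k} \<union> Inr ` Inr ` {..<m}"
    and ind: "indisc M P L N cu"
    and N2: "enat 1 < N" "enat 0 < N"
    and au: "\<forall>i'<k. au i' < L"
    and YP: "\<forall>i<n. i \<noteq> u \<longrightarrow> (\<forall>i'<k. Y i i' \<in> P)"
    and ZP: "\<forall>i<n. \<forall>j<m. Z i j \<in> P"
    and u: "u < n" "u \<notin> S"
    and G1: "\<exists>d'. \<forall>i<n. (i\<in>S \<longleftrightarrow> sat M (asg3 d' (if i = u then (\<lambda>i'. cu 1 ! au i') else Y i) (Z i)) \<phi>)"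
  shows "\<exists>d'. \<forall>i<n. (i\<in>S \<longleftrightarrow> sat M (asg3 d' (if i = u then (\<lambda>i'. cu 0 ! au i') else Y i) (Z i)) \<phi>)"
proof -
  define X where "X = {\<iota>. Inl \<iota> \<in> fv \<phi>}"
  have finX: "finite X"
  proof -
    have "X \<subseteq> projl ` fv \<phi>" unfolding X_def by force
    then show ?thesis using finite_fv finite_subset by blast
  qed
  obtain h :: "'i \<Rightarrow> nat" where h: "inj_on h X" using finite_imp_inj_to_nat_seg[OF finX] by blast
  obtain xs where xs: "set xs = X" using finite_list[OF finX] by blast
  define xv where "xv \<iota> = (Inl (1, h \<iota>) :: nat \<times> nat + nat)" for \<iota>
  have injxv: "inj_on xv X" using h by (auto simp: inj_on_def xv_def)
  define \<sigma> where "\<sigma> = sigT h u au k m"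
  define lit where "lit i = (if i\<in>S then subf frT (\<sigma> i) 0 \<phi> else Neg (subf frT (\<sigma> i) 0 \<phi>))" for i
  define \<Psi> where "\<Psi> = foldr Ex (map xv xs) (conjs (map lit [0..<n]))"
  have injfr: "inj frT" by (auto simp: inj_def frT_def)
  have inv: "\<forall>v. \<sigma> i v \<notin> frT ` {0..}" for i
    by (auto simp: \<sigma>_def sigT_def frT_def split: sum.splits)
  have sem: "sat M w \<Psi> \<longleftrightarrow> (\<exists>w'. (\<forall>v. v \<notin> xv ` X \<longrightarrow> w' v = w v) \<and> (\<forall>i<n. i\<in>S \<longleftrightarrow> sat M (w' \<circ> \<sigma> i) \<phi>))" for w
  proof -
    have "sat M w' (conjs (map lit [0..<n])) \<longleftrightarrow> (\<forall>i<n. i\<in>S \<longleftrightarrow> sat M (w' \<circ> \<sigma> i) \<phi>)" for w'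
    proof -
      have "sat M w' (conjs (map lit [0..<n])) \<longleftrightarrow> (\<forall>i<n. sat M w' (lit i))"
        by (auto simp: sat_conjs)
      moreover have "sat M w' (lit i) \<longleftrightarrow> (i\<in>S \<longleftrightarrow> sat M (w' \<circ> \<sigma> i) \<phi>)" for i
        by (simp add: lit_def sat_subf[OF injfr inv])
      ultimately show ?thesis by simp
    qed
    then show ?thesis unfolding \<Psi>_def sat_exs using xs by simp
  qed
  define raw where "raw p = (if p mod (k+m) < k then Y (p div (k+m)) (p mod (k+m)) else Z (p div (k+m)) (p mod (k+m) - k))" for p
  define e where "e p = (if raw p \<in> P then raw p else (SOME x. x \<in> P))" for p
  define q where "q = (if P = {} then 0 else n*(k+m))"
  define w :: "nat \<Rightarrow> nat \<times> nat + nat \<Rightarrow> 'a" where "w \<epsilon> = (\<lambda>v. case v of Inl (i, \<alpha>) \<Rightarrow> cu \<epsilon> ! \<alpha> | Inr j \<Rightarrow> e j)" for \<epsilon>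
  have eY: "e (i*(k+m)+i') = Y i i'" if "i < n" "i \<noteq> u" "i' < k" for i i'
    using that YP dm_lemma[of i' "k+m" i] by (simp add: e_def raw_def)
  have eZ: "e (i*(k+m)+k+j) = Z i j" if "i < n" "j < m" for i j
    using that ZP dm_lemma[of "k+j" "k+m" i] by (simp add: e_def raw_def add.assoc)
  have agree: "sat M (w' \<circ> \<sigma> i) \<phi> \<longleftrightarrow> sat M (asg3 D (if i = u then (\<lambda>i'. cu \<epsilon> ! au i') else Y i) (Z i)) \<phi>"
    if i: "i < n" and w': "\<forall>v. v \<notin> xv ` X \<longrightarrow> w' v = w \<epsilon> v" and D: "\<forall>\<iota>\<in>X. w' (xv \<iota>) = D \<iota>" for w' D i \<epsilon>
  proof (rule sat_agree, intro ballI)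
    fix v assume v: "v \<in> fv \<phi>"
    show "(w' \<circ> \<sigma> i) v = asg3 D (if i = u then (\<lambda>i'. cu \<epsilon> ! au i') else Y i) (Z i) v"
    proof (cases v)
      case (Inl \<iota>)
      then have "\<iota> \<in> X" using v X_def by simp
      then show ?thesis using Inl D by (simp add: \<sigma>_def sigT_def asg3_def xv_def)
    next
      case (Inr w1)
      show ?thesis
      proof (cases w1)
        case (Inl i')
        then have i': "i' < k" using v fv\<phi> Inr by auto
        have nx: "\<sigma> i v \<notin> xv ` X" using Inr Inl by (auto simp: \<sigma>_def sigT_def xv_def)
        show ?thesis
        proof (cases "i = u")
          case True
          then show ?thesis using w' nx Inr Inl by (simp add: \<sigma>_def sigT_def asg3_def w_def)
        next
          case False
          then show ?thesis using w' nx Inr Inl eY[OF i False i'] by (simp add: \<sigma>_def sigT_def asg3_def w_def)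
        qed
      next
        case (Inr j)
        then have j: "j < m" using v fv\<phi> \<open>v = Inr w1\<close> by auto
        have nx: "\<sigma> i v \<notin> xv ` X" using \<open>v = Inr w1\<close> Inr by (auto simp: \<sigma>_def sigT_def xv_def)
        then show ?thesis using w' \<open>v = Inr w1\<close> Inr eZ[OF i j] by (simp add: \<sigma>_def sigT_def asg3_def w_def)
      qed
    qed
  qed
  have fvPsi: "fv \<Psi> \<subseteq> {Inl (i, \<alpha>) | i \<alpha>. i < 1 \<and> \<alpha> < L} \<union> Inr ` {..<q}"
  proof
    fix v assume "v \<in> fv \<Psi>"
    then obtain i where i: "i < n" and vi: "v \<in> fv (subf frT (\<sigma> i) 0 \<phi>)" and vx: "v \<notin> xv ` X"
      unfolding \<Psi>_def fv_exs fv_conjs using xs by (auto simp: lit_def split: if_splits)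
    then obtain x where x: "x \<in> fv \<phi>" "v = \<sigma> i x" using fv_subf[of frT "\<sigma> i" 0 \<phi>] by blast
    show "v \<in> {Inl (i, \<alpha>) | i \<alpha>. i < 1 \<and> \<alpha> < L} \<union> Inr ` {..<q}"
    proof (cases x)
      case (Inl \<iota>)
      then show ?thesis using x vx X_def by (auto simp: \<sigma>_def sigT_def xv_def)
    next
      case (Inr w1)
      show ?thesis
      proof (cases w1)
        case (Inl i')
        then have i': "i' < k" using x fv\<phi> Inr by auto
        show ?thesis
        proof (cases "i = u")
          case True
          then show ?thesis using x Inr Inl au i' by (auto simp: \<sigma>_def sigT_def)
        next
          case False
          then have "P \<noteq> {}" using YP i i' by blast
          then show ?thesis using x Inr Inl False lt_lemma[OF i, of i' "k+m"] i' by (auto simp: \<sigma>_def sigT_def q_def)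
        qed
      next
        case (Inr j)
        then have j: "j < m" using x fv\<phi> \<open>x = Inr w1\<close> by auto
        then have "P \<noteq> {}" using ZP i by blast
        then show ?thesis using x \<open>x = Inr w1\<close> Inr lt_lemma[OF i, of "k+j" "k+m"] j
          by (auto simp: \<sigma>_def sigT_def q_def add.assoc)
      qed
    qed
  qed
  have eP: "\<forall>j<q. e j \<in> P"
  proof (cases "P = {}")
    case True then show ?thesis by (simp add: q_def)
  next
    case False then show ?thesis by (auto simp: e_def intro: someI_ex)
  qed
  have inc1: "incr_seq 1 N (\<lambda>_. 1)" and inc0: "incr_seq 1 N (\<lambda>_. 0)"
    using N2 by (auto simp: incr_seq_def)
  have tr: "sat M (w 1) \<Psi> \<longleftrightarrow> sat M (w 0) \<Psi>"
  proof -
    have "sat M (\<lambda>v. case v of Inl (i, \<alpha>) \<Rightarrow> cu ((\<lambda>_. 1::nat) i) ! \<alpha> | Inr j \<Rightarrow> e j) \<Psi>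
        \<longleftrightarrow> sat M (\<lambda>v. case v of Inl (i, \<alpha>) \<Rightarrow> cu ((\<lambda>_. 0::nat) i) ! \<alpha> | Inr j \<Rightarrow> e j) \<Psi>"
      apply (rule ind[unfolded indisc_def, rule_format])
      using fvPsi eP inc1 inc0 by blast
    then show ?thesis unfolding w_def .
  qed
  obtain d' where d': "\<forall>i<n. (i\<in>S \<longleftrightarrow> sat M (asg3 d' (if i = u then (\<lambda>i'. cu 1 ! au i') else Y i) (Z i)) \<phi>)"
    using G1 by blast
  define w' where "w' v = (if v \<in> xv ` X then d' (inv_into X xv v) else w 1 v)" for v
  have "sat M (w 1) \<Psi>"
    unfolding sem
  proof (intro exI[of _ w'] conjI allI impI)
    fix v assume "v \<notin> xv ` X" then show "w' v = w 1 v" by (simp add: w'_def)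
  next
    fix i assume i: "i < n"
    have "sat M (w' \<circ> \<sigma> i) \<phi> \<longleftrightarrow> sat M (asg3 d' (if i = u then (\<lambda>i'. cu 1 ! au i') else Y i) (Z i)) \<phi>"
      by (rule agree[OF i]) (auto simp: w'_def injxv)
    then show "i \<in> S \<longleftrightarrow> sat M (w' \<circ> \<sigma> i) \<phi>" using d' i by simp
  qed
  then have "sat M (w 0) \<Psi>" using tr by simp
  then obtain w2 where w2: "\<forall>v. v \<notin> xv ` X \<longrightarrow> w2 v = w 0 v" "\<forall>i<n. i\<in>S \<longleftrightarrow> sat M (w2 \<circ> \<sigma> i) \<phi>"
    unfolding sem by blast
  show ?thesis
  proof (intro exI[of _ "w2 \<circ> xv"] allI impI)
    fix i assume i: "i < n"
    show "i\<in>S \<longleftrightarrow> sat M (asg3 (w2 \<circ> xv) (if i = u then (\<lambda>i'. cu 0 ! au i') else Y i) (Z i)) \<phi>"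
      using agree[OF i w2(1), of "w2 \<circ> xv"] w2(2) i by simp
  qed
qed



lemma enat2: "(2::enat) \<le> N \<Longrightarrow> (\<epsilon>::nat) < 2 \<Longrightarrow> enat \<epsilon> < N"
  by (cases N) (auto simp: numeral_eq_enat)

theorem claim2p17:
  fixes M :: "('f, 'r, 'a) struc"
    and \<phi> :: "('f, 'r, 'i + nat + nat) fml"
    and k m :: nat
  assumes "dependent M"
    and "fv \<phi> \<subseteq> range Inl \<union> Inr ` Inl ` {..<k} \<union> Inr ` Inr ` {..<m}"
  shows "\<exists>N::nat. \<forall>(A :: 'a set) (B :: 'a set) (I :: 't set) n L c (d :: 'i \<Rightarrow> 'a).
           K0 M A B I n L c d \<longrightarrow>
           finite (Jset M \<phi> k m A I n L c d) \<and> card (Jset M \<phi> k m A I n L c d) \<le> N"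
proof -
  define X where "X = {\<iota>. Inl \<iota> \<in> fv \<phi>}"
  have finX: "finite X"
  proof -
    have "X \<subseteq> projl ` fv \<phi>" unfolding X_def by force
    then show ?thesis using finite_fv finite_subset by blast
  qed
  obtain h :: "'i \<Rightarrow> nat" where h: "inj_on h X" using finite_imp_inj_to_nat_seg[OF finX] by blast
  define \<psi> where "\<psi> = subf frI (sigI h) 0 \<phi>"
  have "\<not> has_IP M \<psi>" using assms(1) unfolding dependent_def by blast
  then obtain n0 where n0: "\<not> (\<exists>a :: nat \<Rightarrow> nat \<Rightarrow> 'a. \<forall>S\<subseteq>{..<n0}. \<exists>b :: nat \<Rightarrow> 'a. \<forall>i<n0.
      (sat M (\<lambda>v. case v of Inl j \<Rightarrow> a i j | Inr j \<Rightarrow> b j) \<psi> \<longleftrightarrow> i \<in> S))"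
    unfolding has_IP_def by (auto simp only: not_all)
  have noshat: "\<not> (\<forall>S\<subseteq>{..<n0}. \<exists>d'. \<forall>i<n0. (i\<in>S \<longleftrightarrow> sat M (asg3 d' (Y i) (Z i)) \<phi>))" for Y Z
  proof
    assume "\<forall>S\<subseteq>{..<n0}. \<exists>d'. \<forall>i<n0. (i\<in>S \<longleftrightarrow> sat M (asg3 d' (Y i) (Z i)) \<phi>)"
    from shatter[OF h[unfolded X_def] this]
    have "\<exists>a :: nat \<Rightarrow> nat \<Rightarrow> 'a. \<forall>S\<subseteq>{..<n0}. \<exists>b :: nat \<Rightarrow> 'a. \<forall>i<n0.
      (sat M (\<lambda>v. case v of Inl j \<Rightarrow> a i j | Inr j \<Rightarrow> b j) \<psi> \<longleftrightarrow> i \<in> S)"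
      unfolding \<psi>_def .
    then show False using n0 by (rule notE[rotated])
  qed
  show ?thesis
  proof (intro exI[of _ "(2*m+1)*n0"] allI impI)
    fix A B :: "'a set" and I :: "'t set" and nn L c and d :: "'i \<Rightarrow> 'a"
    assume K: "K0 M A B I nn L c d"
    define J where "J = Jset M \<phi> k m A I nn L c d"
    have KI: "\<forall>t\<in>I. \<forall>k. enat k < nn t \<longrightarrow> length (c t k) = L t"
      "\<forall>t\<in>I. indisc M (params A I nn c t) (L t) (nn t) (c t)" using K unfolding K0_def by blast+
    have JI: "\<forall>t\<in>J. t \<in> I \<and> 2 \<le> nn t" unfolding J_def Jset_def by blast
    have "\<forall>t\<in>J. \<exists>\<alpha> b. (\<forall>i<k. \<alpha> i < L t) \<and> (\<forall>j<m. b j \<in> params A I nn c t)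
         \<and> sat M (asg3 d (\<lambda>i. c t 0 ! \<alpha> i) b) \<phi> \<and> \<not> sat M (asg3 d (\<lambda>i. c t 1 ! \<alpha> i) b) \<phi>"
      unfolding J_def Jset_def by blast
    then obtain \<alpha> bb where ab: "\<forall>t\<in>J. (\<forall>i<k. \<alpha> t i < L t) \<and> (\<forall>j<m. bb t j \<in> params A I nn c t)
         \<and> sat M (asg3 d (\<lambda>i. c t 0 ! \<alpha> t i) (bb t)) \<phi> \<and> \<not> sat M (asg3 d (\<lambda>i. c t 1 ! \<alpha> t i) (bb t)) \<phi>"
      by metis
    define R where "R x y = (x \<noteq> y \<and> \<not> (\<forall>l<m. bb x l \<in> params A I nn c y))" for x y
    have key: "card F < (2*m+1)*n0" if F: "F \<subseteq> J" "finite F" for F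
    proof (rule ccontr)
      assume "\<not> card F < (2*m+1)*n0"
      then have cF: "(2*m+1)*n0 \<le> card F" by simp
      have deg: "\<forall>x\<in>F. card {y\<in>F. R x y} \<le> m"
      proof
        fix x assume xF: "x \<in> F"
        then have xJ: "x \<in> J" using F by blast
        define G where "G l = {y\<in>F. y \<noteq> x \<and> bb x l \<notin> params A I nn c y}" for l
        have sub: "{y\<in>F. R x y} \<subseteq> (\<Union>l\<in>{..<m}. G l)" by (auto simp: R_def G_def)
        have one: "card (G l) \<le> 1" if l: "l < m" for l
        proof -
          have finG: "finite (G l)" using F(2) by (simp add: G_def)
          have inx: "bb x l \<in> params A I nn c x" using ab xJ l by blast
          have "\<forall>y1\<in>G l. \<forall>y2\<in>G l. y1 = y2"
          proof (intro ballI)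
            fix y1 y2 assume y: "y1 \<in> G l" "y2 \<in> G l"
            obtain s where s: "s \<in> I" "s \<noteq> x" "bb x l \<in> cset (c s) (nn s)" "bb x l \<notin> A"
              using inx y(1) by (auto simp: params_def G_def)
            have "s = y1" using s y(1) by (auto simp: params_def G_def)
            moreover have "s = y2" using s y(2) by (auto simp: params_def G_def)
            ultimately show "y1 = y2" by simp
          qed
          then show ?thesis using card_le_Suc0_iff_eq[OF finG] by simp
        qed
        have "card {y\<in>F. R x y} \<le> card (\<Union>l\<in>{..<m}. G l)"
          using F(2) by (intro card_mono[OF _ sub]) (auto simp: G_def)
        also have "\<dots> \<le> (\<Sum>l\<in>{..<m}. card (G l))" by (rule card_UN_le) simp
        also have "\<dots> \<le> (\<Sum>l\<in>{..<m}. 1)" using one by (intro sum_mono) simp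
        finally show "card {y\<in>F. R x y} \<le> m" by simp
      qed
      obtain T where T: "T \<subseteq> F" "\<forall>x\<in>T. \<forall>y\<in>T. R x y \<longrightarrow> x = y" "card F \<le> (2*m+1) * card T"
        using indep_set[OF F(2) deg] by blast
      have "(2*m+1)*n0 \<le> (2*m+1) * card T" using cF T(3) by linarith
      then have "n0 \<le> card T" by (subst (asm) mult_le_cancel1) simp
      then obtain T' where T': "T' \<subseteq> T" "card T' = n0" and finT': "finite T'"
        by (rule obtain_subset_with_card_n)
      obtain t where t: "bij_betw t {0..<n0} T'" using ex_bij_betw_nat_finite[OF finT'] unfolding T'(2) by blast
      have tT: "\<forall>i<n0. t i \<in> T" using t T'(1) bij_betw_apply by fastforce
      have tI: "\<forall>i<n0. t i \<in> J" using tT T(1) F(1) by blast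
      have tinj: "\<forall>i<n0. \<forall>j<n0. t i = t j \<longrightarrow> i = j"
        using bij_betw_imp_inj_on[OF t] by (auto dest: inj_onD)
      have indep: "\<forall>i<n0. \<forall>j<n0. i \<noteq> j \<longrightarrow> (\<forall>l<m. bb (t i) l \<in> params A I nn c (t j))"
        using T(2) tT tinj unfolding R_def by metis
      have mem: "c (t i) \<epsilon> ! \<alpha> (t i) i' \<in> params A I nn c (t j)"
        if "i < n0" "j < n0" "i \<noteq> j" "\<epsilon> < 2" "i' < k" for i j \<epsilon> i'
      proof -
        have ti: "t i \<in> I" "2 \<le> nn (t i)" using JI tI that by auto
        have e: "enat \<epsilon> < nn (t i)" using enat2 ti that by blast
        have len: "length (c (t i) \<epsilon>) = L (t i)" using KI(1) ti e by blast
        have "\<alpha> (t i) i' < L (t i)" using ab tI that by blast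
        then have "c (t i) \<epsilon> ! \<alpha> (t i) i' \<in> cset (c (t i)) (nn (t i))"
          using len e unfolding cset_def by (auto intro!: nth_mem)
        moreover have "t i \<noteq> t j" using tinj that by blast
        ultimately show ?thesis using ti unfolding params_def by blast
      qed
      have "\<forall>S\<subseteq>{..<n0}. \<exists>d'. \<forall>i<n0. (i\<in>S \<longleftrightarrow> sat M (asg3 d' (\<lambda>i'. c (t i) 0 ! \<alpha> (t i) i') (bb (t i))) \<phi>)"
      proof (intro allI impI)
        fix S assume S: "S \<subseteq> {..<n0}"
        define Gd where "Gd \<epsilon> \<longleftrightarrow> (\<exists>d'. \<forall>i<n0. (i\<in>S \<longleftrightarrow> sat M (asg3 d' (\<lambda>i'. c (t i) (\<epsilon> i) ! \<alpha> (t i) i') (bb (t i))) \<phi>))"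
          for \<epsilon> :: "nat \<Rightarrow> nat"
        have step: "finite V \<Longrightarrow> V \<subseteq> {..<n0} - S \<Longrightarrow> Gd (\<lambda>i. if i\<in>S \<or> i\<in>V then 0 else 1)" for V
        proof (induction V rule: finite_induct)
          case empty
          show ?case unfolding Gd_def
          proof (intro exI[of _ d] allI impI)
            fix i assume "i<n0"
            then show "i\<in>S \<longleftrightarrow> sat M (asg3 d (\<lambda>i'. c (t i) ((\<lambda>i. if i\<in>S \<or> i\<in>{} then 0 else 1) i) ! \<alpha> (t i) i') (bb (t i))) \<phi>"
              using ab tI by (cases "i\<in>S") auto
          qed
        next
          case (insert u V)
          define \<epsilon> where "\<epsilon> = (\<lambda>i. if i\<in>S \<or> i\<in>V then 0 else (1::nat))"
          define Y where "Y i = (\<lambda>i'. c (t i) (\<epsilon> i) ! \<alpha> (t i) i')" for i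
          have u: "u < n0" "u \<notin> S" "u \<notin> V" using insert by auto
          have G: "Gd \<epsilon>" using insert unfolding \<epsilon>_def by auto
          have tu: "t u \<in> I" "2 \<le> nn (t u)" using JI tI u by auto
          have N1: "enat 1 < nn (t u)" and N0: "enat 0 < nn (t u)" using enat2 tu by auto
          have au: "\<forall>i'<k. \<alpha> (t u) i' < L (t u)" using ab tI u by blast
          have YP: "\<forall>i<n0. i \<noteq> u \<longrightarrow> (\<forall>i'<k. Y i i' \<in> params A I nn c (t u))"
            using mem u unfolding Y_def \<epsilon>_def by auto
          have ZP: "\<forall>i<n0. \<forall>j<m. (\<lambda>i. bb (t i)) i j \<in> params A I nn c (t u)"
          proof (intro allI impI)
            fix i j assume "i < n0" "j < m"
            then show "(\<lambda>i. bb (t i)) i j \<in> params A I nn c (t u)"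
              using indep ab tI u by (cases "i = u") auto
          qed
          have eq1: "(if i = u then (\<lambda>i'. c (t u) 1 ! \<alpha> (t u) i') else Y i) = (\<lambda>i'. c (t i) (\<epsilon> i) ! \<alpha> (t i) i')" for i
            using u by (auto simp: Y_def \<epsilon>_def)
          have G1: "\<exists>d'. \<forall>i<n0. (i\<in>S \<longleftrightarrow> sat M (asg3 d' (if i = u then (\<lambda>i'. c (t u) 1 ! \<alpha> (t u) i') else Y i) ((\<lambda>i. bb (t i)) i)) \<phi>)"
            using G unfolding Gd_def eq1 by simp
          have res: "\<exists>d'. \<forall>i<n0. (i\<in>S \<longleftrightarrow> sat M (asg3 d' (if i = u then (\<lambda>i'. c (t u) 0 ! \<alpha> (t u) i') else Y i) ((\<lambda>i. bb (t i)) i)) \<phi>)"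
            by (rule transfer_step[OF assms(2) KI(2)[rule_format, OF tu(1)] N1 N0 au YP ZP u(1,2) G1])
          have eq0: "(if i = u then (\<lambda>i'. c (t u) 0 ! \<alpha> (t u) i') else Y i) = (\<lambda>i'. c (t i) ((\<lambda>i. if i\<in>S \<or> i\<in>insert u V then 0 else 1) i) ! \<alpha> (t i) i')" for i
            by (auto simp: Y_def \<epsilon>_def)
          show ?case using res unfolding Gd_def eq0 by simp
        qed
        have "Gd (\<lambda>i. if i\<in>S \<or> i\<in>{..<n0}-S then 0 else 1)" by (rule step) auto
        then obtain d' where d': "\<forall>i<n0. (i\<in>S \<longleftrightarrow> sat M (asg3 d' (\<lambda>i'. c (t i) (if i\<in>S \<or> i\<in>{..<n0}-S then 0 else 1) ! \<alpha> (t i) i') (bb (t i))) \<phi>)"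
          unfolding Gd_def by blast
        show "\<exists>d'. \<forall>i<n0. (i\<in>S \<longleftrightarrow> sat M (asg3 d' (\<lambda>i'. c (t i) 0 ! \<alpha> (t i) i') (bb (t i))) \<phi>)"
        proof (intro exI[of _ d'] allI impI)
          fix i assume "i < n0"
          then show "i\<in>S \<longleftrightarrow> sat M (asg3 d' (\<lambda>i'. c (t i) 0 ! \<alpha> (t i) i') (bb (t i))) \<phi>"
            using d' by simp
        qed
      qed
      then show False using noshat[of "\<lambda>i i'. c (t i) 0 ! \<alpha> (t i) i'" "\<lambda>i. bb (t i)"] by blast
    qed
    have finJ: "finite J"
    proof (rule ccontr)
      assume "infinite J"
      then obtain F where F: "F \<subseteq> J" "finite F" "card F = (2*m+1)*n0"
        using infinite_arbitrarily_large by blast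
      then show False using key[OF F(1,2)] by simp
    qed
    show "finite (Jset M \<phi> k m A I nn L c d) \<and> card (Jset M \<phi> k m A I nn L c d) \<le> (2*m+1)*n0"
    proof -
      have "card J < (2*m+1)*n0" using key[OF order_refl finJ] .
      then show ?thesis using finJ unfolding J_def by simp
    qed
  qed
qed

end
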